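(* Let $\nu\ge0$, $K>\nu+1$, and let $r>0$ satisfy $r=\Psi_\nu(2Kr)$, where $\Psi_\nu(x)=I_{\nu+1}(x)/I_\nu(x)$. Then $$r<\sqrt{1-\frac{1}{2K}}.$$
   Context: $I_\nu$ denotes the modified Bessel function of the first kind of order $\nu$. *)

theory Defs
  imports "HOL-Analysis.Analysis"
begin

text \<open>We use it for x > 0 (where powr is the usual real power).\<close>
definition bessel_I :: "real \<Rightarrow> real \<Rightarrow> real" where
  "bessel_I nu x = (\<Sum>m. (x / 2) powr (2 * real m + nu) / (fact m * Gamma (real m + nu + 1)))"

definition Psi :: "real \<Rightarrow> real \<Rightarrow> real" where
  "Psi nu x = bessel_I (nu + 1) x / bessel_I nu x"

end

theory Submission
  imports Defs
begin

definition cf :: "real \<Rightarrow> nat \<Rightarrow> real" where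
  "cf nu k = 1 / (fact k * Gamma (real k + nu + 1))"

lemma G1: "(z::real) > 0 \<Longrightarrow> Gamma (z + 1) = z * Gamma z"
  by (rule Gamma_plus1) (auto simp: nonpos_Ints_def)

lemma cf_pos: "nu > -1 \<Longrightarrow> cf nu k > 0"
  unfolding cf_def by (intro divide_pos_pos mult_pos_pos Gamma_real_pos) auto

lemma cf_shift: assumes "nu > -1" shows "cf nu k = (real k + nu + 1) * cf (nu+1) k"
proof -
  define G where "G = Gamma (real k + nu + 1)"
  have G: "G > 0" unfolding G_def using assms by (intro Gamma_real_pos) auto
  have "Gamma (real k + (nu + 1) + 1) = (real k + nu + 1) * G"
    using G1[of "real k + nu + 1"] assms unfolding G_def by (simp add: add.assoc)
  then have e1: "cf (nu+1) k = 1 / (fact k * ((real k + nu + 1) * G))" unfolding cf_def by simp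
  have e2: "cf nu k = 1 / (fact k * G)" unfolding cf_def G_def by simp
  have c: "real k + nu + 1 > 0" using assms by simp
  have F: "(fact k :: real) > 0" by simp
  show ?thesis unfolding e1 e2 using G c F by (simp add: divide_simps)
qed

lemma cf_rec: assumes "nu > -1" shows "cf nu k = (real k + 1) * (real k + 1 + nu) * cf nu (Suc k)"
proof -
  define G where "G = Gamma (real k + nu + 1)"
  have G: "G > 0" unfolding G_def using assms by (intro Gamma_real_pos) auto
  have "Gamma (real (Suc k) + nu + 1) = (real k + 1 + nu) * G"
    using G1[of "real k + nu + 1"] assms unfolding G_def by (simp add: algebra_simps)
  then have e1: "cf nu (Suc k) = 1 / (fact (Suc k) * ((real k + 1 + nu) * G))" unfolding cf_def by simp
  have e2: "cf nu k = 1 / (fact k * G)" unfolding cf_def G_def by simp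
  have f: "fact (Suc k) = (real k + 1) * fact k" by (simp add: algebra_simps)
  have c: "real k + 1 + nu > 0" using assms by simp
  have F: "(fact k :: real) > 0" by simp
  show ?thesis unfolding e1 e2 f using G c F by (simp add: divide_simps)
qed

lemma sum_reflect:
  fixes u f :: "nat \<Rightarrow> real"
  assumes "\<And>i. i \<le> m \<Longrightarrow> u (m - i) = u i"
  shows "(\<Sum>i\<le>m. u i * f i) = (\<Sum>i\<le>m. u i * f (m - i))"
proof -
  have "(\<Sum>i\<le>m. u i * f i) = (\<Sum>i\<le>m. u (m - i) * f (m - i))"
    by (rule sum.reindex_bij_witness[where i="\<lambda>i. m - i" and j="\<lambda>i. m - i"]) auto
  also have "\<dots> = (\<Sum>i\<le>m. u i * f (m - i))"
    by (rule sum.cong) (auto simp: assms)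
  finally show ?thesis .
qed

lemma telescope:
  fixes b :: "nat \<Rightarrow> real" and mu :: real
  assumes rec: "\<And>k. b k = (real k + 1) * (real k + 1 + mu) * b (Suc k)"
  shows "(\<Sum>i\<le>m. b i * b (m - i) * ((real i)^2 * (real i + mu)
            - real (m - i) * (real (m - i) + mu) * (real i + 1))) = 0"
proof (cases m)
  case 0 then show ?thesis by simp
next
  case (Suc n)
  have A: "(\<Sum>i\<le>m. b i * b (m - i) * ((real i)^2 * (real i + mu)))
      = (\<Sum>i\<le>n. b (Suc i) * b (m - Suc i) * ((real (Suc i))^2 * (real (Suc i) + mu)))"
    unfolding Suc by (subst sum.atMost_Suc_shift) simp
  also have "\<dots> = (\<Sum>i\<le>n. b i * b (m - i) * (real (m - i) * (real (m - i) + mu) * (real i + 1)))"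
  proof (rule sum.cong[OF refl])
    fix i assume "i \<in> {..n}"
    then have i: "i \<le> n" by simp
    have e1: "m - i = Suc (n - i)" using i Suc by simp
    have e2: "m - Suc i = n - i" using Suc by simp
    have r1: "b i = (real i + 1) * (real i + 1 + mu) * b (Suc i)" by (rule rec)
    have r2: "b (n - i) = (real (n - i) + 1) * (real (n - i) + 1 + mu) * b (Suc (n - i))" by (rule rec)
    have e3: "real (Suc (n - i)) = real (n - i) + 1" by simp
    show "b (Suc i) * b (m - Suc i) * ((real (Suc i))^2 * (real (Suc i) + mu))
       = b i * b (m - i) * (real (m - i) * (real (m - i) + mu) * (real i + 1))"
      unfolding e1 e2 e3 r1 r2 by (simp add: power2_eq_square algebra_simps)
  qed
  also have "\<dots> = (\<Sum>i\<le>m. b i * b (m - i) * (real (m - i) * (real (m - i) + mu) * (real i + 1)))"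
    unfolding Suc by simp
  finally show ?thesis by (simp add: sum_subtractf right_diff_distrib)
qed

lemma pointwise_id:
  fixes x y mu M :: real
  assumes "x + y = M"
  defines "W \<equiv> \<lambda>x y. (x+mu)*(y+mu) - (x+mu)/2 - y*(y+mu)"
  defines "ZA \<equiv> \<lambda>x y. x^2*(x+mu) - y*(y+mu)*(x+1)"
  shows "(2*M+2*mu-1)*(W x y + W y x) = -2*(ZA x y + ZA y x)
          + ((2*M+2*mu-1)*(mu-1/2)*(M+2*mu) - (M^2+2*mu*M))"
proof -
  have y: "y = M - x" using assms(1) by simp
  show ?thesis unfolding W_def ZA_def y by (simp add: field_simps power2_eq_square)
qed

lemma coef_ineq:
  fixes nu :: real assumes nu: "nu \<ge> 0"
  shows "(\<Sum>i\<le>k. cf (nu+1) i * cf (nu+1) (k-i))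
     \<le> (\<Sum>i\<le>Suc k. cf nu i * (cf nu (Suc k - i) - cf (nu+1) (Suc k - i)/2))"
proof -
  define b where "b = cf (nu+1)"
  define mu where "mu = nu + 1"
  define m where "m = Suc k"
  define M where "M = real m"
  define u where "u = (\<lambda>i. b i * b (m - i))"
  define W where "W = (\<lambda>x y. (x+mu)*(y+mu) - (x+mu)/2 - y*(y+mu))"
  define ZA where "ZA = (\<lambda>x y. x^2*(x+mu) - y*(y+mu)*((x::real)+1))"
  define \<kappa> where "\<kappa> = (2*M+2*mu-1)*(mu-1/2)*(M+2*mu) - (M^2+2*mu*M)"
  have mu1: "mu \<ge> 1" using nu unfolding mu_def by simp
  have rec: "\<And>k. b k = (real k + 1) * (real k + 1 + mu) * b (Suc k)"
    unfolding b_def mu_def by (rule cf_rec) (use nu in simp)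
  have bpos: "\<And>k. b k > 0" unfolding b_def by (rule cf_pos) (use nu in simp)
  have usym: "\<And>i. i \<le> m \<Longrightarrow> u (m - i) = u i" unfolding u_def by simp
  have upos: "\<And>i. u i > 0" unfolding u_def using bpos by simp
  have c1: "(\<Sum>i\<le>m. cf nu i * (cf nu (m - i) - b (m - i)/2))
      = (\<Sum>i\<le>m. u i * ((real i + mu)*(real (m-i) + mu) - (real i + mu)/2))"
  proof (rule sum.cong[OF refl])
    fix i
    have s1: "cf nu j = (real j + mu) * b j" for j
    proof -
      have "cf nu j = (real j + nu + 1) * b j" unfolding b_def by (rule cf_shift) (use nu in simp)
      then show ?thesis by (simp add: mu_def add.assoc)
    qed
    show "cf nu i * (cf nu (m - i) - b (m - i)/2)
      = u i * ((real i + mu)*(real (m-i) + mu) - (real i + mu)/2)"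
      unfolding u_def s1 by (simp add: algebra_simps)
  qed
  have c2: "(\<Sum>i\<le>k. b i * b (k-i)) = (\<Sum>i\<le>m. u i * (real (m-i) * (real (m-i) + mu)))"
  proof -
    have "(\<Sum>i\<le>k. b i * b (k-i)) = (\<Sum>i\<le>k. u i * (real (m-i) * (real (m-i) + mu)))"
    proof (rule sum.cong[OF refl])
      fix i assume "i \<in> {..k}"
      then have i: "i \<le> k" by simp
      have e: "m - i = Suc (k - i)" "real (Suc (k-i)) = real (k-i) + 1" unfolding m_def using i by auto
      show "b i * b (k-i) = u i * (real (m-i) * (real (m-i) + mu))"
        unfolding u_def e rec[of "k-i"] by (simp add: algebra_simps)
    qed
    also have "\<dots> = (\<Sum>i\<le>m. u i * (real (m-i) * (real (m-i) + mu)))"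
      unfolding m_def by simp
    finally show ?thesis .
  qed
  have diff: "(\<Sum>i\<le>m. cf nu i * (cf nu (m - i) - b (m - i)/2)) - (\<Sum>i\<le>k. b i * b (k-i))
     = (\<Sum>i\<le>m. u i * W (real i) (real (m-i)))"
    unfolding c1 c2 W_def by (simp add: sum_subtractf[symmetric] algebra_simps)
  have refl1: "(\<Sum>i\<le>m. u i * W (real i) (real (m-i))) = (\<Sum>i\<le>m. u i * W (real (m-i)) (real i))"
  proof -
    have "(\<Sum>i\<le>m. u i * W (real i) (real (m-i))) = (\<Sum>i\<le>m. u i * (\<lambda>i. W (real i) (real (m-i))) (m-i))"
      by (rule sum_reflect) (rule usym)
    then show ?thesis by (auto intro!: sum.cong)
  qed
  have z1: "(\<Sum>i\<le>m. u i * ZA (real i) (real (m-i))) = 0"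
    using telescope[OF rec, of m] unfolding u_def ZA_def by (simp add: mult.assoc)
  have z2: "(\<Sum>i\<le>m. u i * ZA (real (m-i)) (real i)) = 0"
  proof -
    have "(\<Sum>i\<le>m. u i * ZA (real i) (real (m-i))) = (\<Sum>i\<le>m. u i * (\<lambda>i. ZA (real i) (real (m-i))) (m-i))"
      by (rule sum_reflect) (rule usym)
    with z1 show ?thesis by (auto intro!: sum.cong)
  qed
  have pw: "\<And>i. i \<in> {..m} \<Longrightarrow> u i * ((2*M+2*mu-1) * (W (real i) (real (m-i)) + W (real (m-i)) (real i)))
      = u i * (-2 * (ZA (real i) (real (m-i)) + ZA (real (m-i)) (real i)) + \<kappa>)"
  proof -
    fix i assume "i \<in> {..m}"
    then have "real i + real (m - i) = M" unfolding M_def by simp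
    from pointwise_id[OF this, of mu] show "?thesis i" unfolding W_def ZA_def \<kappa>_def by simp
  qed
  have "(2*M+2*mu-1) * (2 * (\<Sum>i\<le>m. u i * W (real i) (real (m-i))))
      = (\<Sum>i\<le>m. u i * ((2*M+2*mu-1) * (W (real i) (real (m-i)) + W (real (m-i)) (real i))))"
  proof -
    have "2 * (\<Sum>i\<le>m. u i * W (real i) (real (m-i))) = (\<Sum>i\<le>m. u i * W (real i) (real (m-i))) + (\<Sum>i\<le>m. u i * W (real (m-i)) (real i))"
      using refl1 by simp
    also have "\<dots> = (\<Sum>i\<le>m. u i * (W (real i) (real (m-i)) + W (real (m-i)) (real i)))"
      by (simp add: sum.distrib distrib_left)
    finally show ?thesis by (simp add: sum_distrib_left mult.left_commute)
  qed
  also have "\<dots> = (\<Sum>i\<le>m. u i * (-2 * (ZA (real i) (real (m-i)) + ZA (real (m-i)) (real i)) + \<kappa>))"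
    using pw by (rule sum.cong[OF refl])
  also have "\<dots> = (\<Sum>i\<le>m. (-2) * (u i * ZA (real i) (real (m-i))) + (-2) * (u i * ZA (real (m-i)) (real i))
       + \<kappa> * u i)"
    by (rule sum.cong[OF refl]) (simp only: algebra_simps)
  also have "\<dots> = (-2) * (\<Sum>i\<le>m. u i * ZA (real i) (real (m-i))) + (-2) * (\<Sum>i\<le>m. u i * ZA (real (m-i)) (real i))
       + \<kappa> * (\<Sum>i\<le>m. u i)"
    by (simp only: sum.distrib sum_distrib_left)
  also have "\<dots> = \<kappa> * (\<Sum>i\<le>m. u i)" using z1 z2 by simp
  finally have key: "(2*M+2*mu-1) * (2 * (\<Sum>i\<le>m. u i * W (real i) (real (m-i)))) = \<kappa> * (\<Sum>i\<le>m. u i)" .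
  have M0: "M \<ge> 0" unfolding M_def by simp
  have kpos: "\<kappa> \<ge> 0"
  proof -
    have "(2*M+2*mu-1)*(mu-1/2) \<ge> (2*M+1)*(1/2)"
      using mu1 M0 by (intro mult_mono) auto
    then have "(2*M+2*mu-1)*(mu-1/2) - M \<ge> 0" by simp
    moreover have "\<kappa> = (M+2*mu) * ((2*M+2*mu-1)*(mu-1/2) - M)"
      unfolding \<kappa>_def by (simp add: power2_eq_square algebra_simps)
    ultimately show ?thesis using mu1 M0 by simp
  qed
  have "(\<Sum>i\<le>m. u i) \<ge> 0" using upos by (simp add: sum_nonneg less_imp_le)
  with key kpos have "(2*M+2*mu-1) * (2 * (\<Sum>i\<le>m. u i * W (real i) (real (m-i)))) \<ge> 0" by simp
  moreover have "2*M+2*mu-1 > 0" using mu1 M0 by simp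
  ultimately have "(\<Sum>i\<le>m. u i * W (real i) (real (m-i))) \<ge> 0"
    by (simp add: zero_le_mult_iff)
  with diff show ?thesis unfolding b_def m_def by simp
qed

lemma summable_cf:
  fixes nu s :: real assumes nu: "nu > -1" and s: "s \<ge> 0"
  shows "summable (\<lambda>k. cf nu k * s^k)"
proof -
  define N where "N = nat (ceiling (2 * s))"
  show ?thesis
proof (rule summable_ratio_test[of "1/2" N])
  fix n assume n: "N \<le> n"
  have c: "cf nu n = (real n + 1) * (real n + 1 + nu) * cf nu (Suc n)" by (rule cf_rec[OF nu])
  have p: "cf nu (Suc n) > 0" by (rule cf_pos[OF nu])
  have n2: "2 * s \<le> real n" using n unfolding N_def by linarith
  have "s \<le> (real n + 1) * (real n + 1 + nu) / 2"
  proof -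
    have "real n + 1 + nu \<ge> real n" using nu by simp
    have "(real n + 1) * (real n + 1 + nu) \<ge> (real n + 1) * 1 \<or> n = 0"
      using nu by (cases n) (auto intro!: mult_left_mono)
    then show ?thesis using n2 s nu
      by (cases "n = 0") (auto simp: algebra_simps)
  qed
  then have "s * (cf nu (Suc n) * s^n) \<le> ((real n + 1) * (real n + 1 + nu) / 2) * (cf nu (Suc n) * s^n)"
    by (rule mult_right_mono) (use p s in simp)
  then have "cf nu (Suc n) * s ^ Suc n \<le> 1/2 * (cf nu n * s ^ n)"
    unfolding c by (simp add: algebra_simps)
  then show "norm (cf nu (Suc n) * s ^ Suc n) \<le> 1/2 * norm (cf nu n * s ^ n)"
    using cf_pos[OF nu] s by (simp add: abs_mult abs_of_pos)
qed simp
qed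

lemma bessel_expand:
  fixes nu t :: real assumes nu: "nu > -1" and t: "t > 0"
  shows "bessel_I nu (2*t) = t powr nu * (\<Sum>k. cf nu k * (t^2)^k)"
proof -
  have "bessel_I nu (2*t) = (\<Sum>k. t powr nu * (cf nu k * (t^2)^k))"
    unfolding bessel_I_def
  proof (rule arg_cong[where f=suminf], rule ext)
    fix k
    have "t powr (2 * real k + nu) = t powr (real (2*k)) * t powr nu"
      by (simp add: powr_add)
    also have "t powr (real (2*k)) = (t^2)^k"
      using t by (simp only: powr_realpow power_mult)
    finally have "t powr (2 * real k + nu) = t powr nu * (t^2)^k" by simp
    then show "(2*t/2) powr (2 * real k + nu) / (fact k * Gamma (real k + nu + 1)) = t powr nu * (cf nu k * (t^2)^k)"
      unfolding cf_def by simp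
  qed
  also have "\<dots> = t powr nu * (\<Sum>k. cf nu k * (t^2)^k)"
    by (rule suminf_mult[OF summable_cf[OF nu]]) simp
  finally show ?thesis .
qed

lemma cauchy_rewrite:
  fixes s :: real and f g :: "nat \<Rightarrow> real"
  shows "(\<Sum>i\<le>k. (f i * s^i) * (g (k-i) * s^(k-i))) = s^k * (\<Sum>i\<le>k. f i * g (k-i))"
  unfolding sum_distrib_left
proof (rule sum.cong[OF refl])
  fix i assume "i \<in> {..k}"
  then have "s^i * s^(k-i) = s^k" by (simp add: power_add[symmetric])
  moreover have "(f i * s^i) * (g (k-i) * s^(k-i)) = (s^i * s^(k-i)) * (f i * g (k-i))"
    by (simp only: mult_ac)
  ultimately show "(f i * s^i) * (g (k-i) * s^(k-i)) = s^k * (f i * g (k-i))"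
    by simp
qed

lemma key_ineq:
  fixes nu s :: real assumes nu: "nu \<ge> 0" and s: "s > 0"
  defines "A \<equiv> (\<Sum>k. cf nu k * s^k)" and "B \<equiv> (\<Sum>k. cf (nu+1) k * s^k)"
  shows "A*A - A*B/2 - s*(B*B) > 0"
proof -
  have nu1: "nu > -1" "nu + 1 > -1" using nu by auto
  have na: "(\<lambda>k. norm (cf nu k * s^k)) = (\<lambda>k. cf nu k * s^k)"
    using cf_pos[OF nu1(1)] s by (auto simp: abs_mult abs_of_pos)
  have nb: "(\<lambda>k. norm (cf (nu+1) k * s^k)) = (\<lambda>k. cf (nu+1) k * s^k)"
    using cf_pos[OF nu1(2)] s by (auto simp: abs_mult abs_of_pos)
  have sa: "summable (\<lambda>k. norm (cf nu k * s^k))" unfolding na using summable_cf[OF nu1(1)] s by simp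
  have sb: "summable (\<lambda>k. norm (cf (nu+1) k * s^k))" unfolding nb using summable_cf[OF nu1(2)] s by simp
  have P1: "(\<lambda>k. s^k * (\<Sum>i\<le>k. cf nu i * cf nu (k-i))) sums (A*A)"
    using Cauchy_product_sums[OF sa sa] unfolding A_def cauchy_rewrite .
  have P2: "(\<lambda>k. s^k * (\<Sum>i\<le>k. cf nu i * cf (nu+1) (k-i))) sums (A*B)"
    using Cauchy_product_sums[OF sa sb] unfolding A_def B_def cauchy_rewrite .
  have P3: "(\<lambda>k. s^k * (\<Sum>i\<le>k. cf (nu+1) i * cf (nu+1) (k-i))) sums (B*B)"
    using Cauchy_product_sums[OF sb sb] unfolding B_def cauchy_rewrite .
  define c1 where "c1 = (\<lambda>k. \<Sum>i\<le>k. cf nu i * (cf nu (k-i) - cf (nu+1) (k-i)/2))"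
  define c2 where "c2 = (\<lambda>k. \<Sum>i\<le>k. cf (nu+1) i * cf (nu+1) (k-i))"
  have e1: "(\<lambda>k. s^k * (\<Sum>i\<le>k. cf nu i * cf nu (k-i)) - s^k * (\<Sum>i\<le>k. cf nu i * cf (nu+1) (k-i)) / 2)
      = (\<lambda>k. s^k * c1 k)"
  proof (rule ext)
    fix k
    have "c1 k = (\<Sum>i\<le>k. cf nu i * cf nu (k-i)) - (\<Sum>i\<le>k. cf nu i * cf (nu+1) (k-i)) / 2"
      unfolding c1_def sum_divide_distrib sum_subtractf[symmetric]
      by (intro sum.cong refl) (simp add: algebra_simps)
    then show "s^k * (\<Sum>i\<le>k. cf nu i * cf nu (k-i)) - s^k * (\<Sum>i\<le>k. cf nu i * cf (nu+1) (k-i)) / 2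
      = s^k * c1 k" unfolding \<open>c1 k = _\<close> by (simp add: right_diff_distrib)
  qed
  have h1: "(\<lambda>k. s^k * c1 k) sums (A*A - A*B/2)"
    using sums_diff[OF P1 sums_divide[OF P2, of 2]] unfolding e1 .
  have h2: "(\<lambda>k. s^(Suc k) * c2 k) sums (s*(B*B))"
    using sums_mult[OF P3, of s] unfolding c2_def by (simp add: mult.assoc)
  have h1': "(\<lambda>k. s^(Suc k) * c1 (Suc k)) sums (A*A - A*B/2 - c1 0)"
    using h1 sums_Suc_iff[of "\<lambda>k. s^k * c1 k" "A*A - A*B/2 - c1 0"] by simp
  have le: "s^(Suc k) * c2 k \<le> s^(Suc k) * c1 (Suc k)" for k
    using coef_ineq[OF nu, of k] s unfolding c1_def c2_def by (intro mult_left_mono) auto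
  have "s*(B*B) \<le> A*A - A*B/2 - c1 0" by (rule sums_le[OF le h2 h1'])
  moreover have "c1 0 > 0"
  proof -
    have "cf nu 0 = (nu + 1) * cf (nu+1) 0" using cf_shift[OF nu1(1), of 0] by simp
    moreover have "cf (nu+1) 0 > 0" by (rule cf_pos[OF nu1(2)])
    moreover have "c1 0 = cf nu 0 * (cf nu 0 - cf (nu+1) 0 / 2)" unfolding c1_def by simp
    ultimately have "c1 0 = ((nu + 1) * cf (nu+1) 0) * ((nu + 1/2) * cf (nu+1) 0)" by (simp add: algebra_simps)
    moreover have "(nu + 1) * cf (nu+1) 0 > 0" "(nu + 1/2) * cf (nu+1) 0 > 0"
      using \<open>cf (nu+1) 0 > 0\<close> nu by auto
    ultimately show ?thesis by simp
  qed
  ultimately show ?thesis by simp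
qed

theorem mainTheorem4:
  fixes nu K r :: real
  assumes "nu \<ge> 0" and "K > nu + 1" and "r > 0" and "r = Psi nu (2 * K * r)"
  shows "r < sqrt (1 - 1 / (2 * K))"
proof -
  have nu: "nu \<ge> 0" and K: "K > 1" and r: "r > 0" using assms by auto
  define t where "t = K * r"
  have t: "t > 0" unfolding t_def using K r by simp
  define A where "A = (\<Sum>k. cf nu k * (t^2)^k)"
  define B where "B = (\<Sum>k. cf (nu+1) k * (t^2)^k)"
  have nu1: "nu > -1" "nu + 1 > -1" using nu by auto
  have Apos: "A > 0" unfolding A_def
    by (rule suminf_pos[OF summable_cf[OF nu1(1)]]) (use cf_pos[OF nu1(1)] t in auto)
  have I1: "bessel_I nu (2*t) = t powr nu * A" unfolding A_def by (rule bessel_expand[OF nu1(1) t])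
  have I2: "bessel_I (nu+1) (2*t) = t powr nu * t * B" unfolding B_def
    using bessel_expand[OF nu1(2) t] t by (simp add: powr_add)
  have tp: "t powr nu > 0" using t by simp
  have "r = bessel_I (nu+1) (2*t) / bessel_I nu (2*t)"
    using assms(4) unfolding Psi_def t_def by (simp add: mult.assoc)
  then have "r = t powr nu * t * B / (t powr nu * A)" unfolding I1 I2 .
  then have rA: "r * A = t * B" using tp Apos by (simp add: field_simps)
  have key: "A*A - A*B/2 - t^2*(B*B) > 0" unfolding A_def B_def by (rule key_ineq[OF nu]) (use t in simp)
  have "A^2 * r^2 = t^2 * (B*B)" using rA by (metis power2_eq_square power_mult_distrib mult.commute)
  moreover have "A^2 * (1 / (2*K)) = A*B/2"
  proof -
    have "A^2 * (1/(2*K)) = A * (r*A) / (2*t)" unfolding t_def using r K by (simp add: field_simps power2_eq_square)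
    also have "\<dots> = A*B/2" using rA t by (simp add: field_simps)
    finally show ?thesis .
  qed
  ultimately have "A^2 * (r^2 + 1/(2*K)) < A^2 * 1" using key by (simp add: algebra_simps power2_eq_square)
  then have "r^2 + 1/(2*K) < 1" using Apos by (simp add: mult_less_cancel_left)
  then have "r^2 < 1 - 1/(2*K)" by simp
  then show ?thesis by (rule real_less_rsqrt)
qed

end
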